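(* The open set $\mathcal T_+\setminus\mathcal L$ is connected and simply connected.
   Context: Let $d\ge2$ and let $\Pi_0^{(c)}=\mathbb C^{d}$ with coordinates $z^0,\dots,z^{d-1}$ and bilinear form $(z,z')=z^0z'^0-\sum_{j=1}^{d-1}z^jz'^j$ (complex Minkowski space). The future tube is $\mathcal T_+=\{X+iY\in\Pi_0^{(c)}: X,Y\in\mathbb R^d,\ (Y,Y)>0,\ Y^0>0\}$, and $\mathcal L=\{z\in\Pi_0^{(c)}:(z,z)+1\in(-\infty,0]\}$. *)

theory Defs
  imports "HOL-Analysis.Analysis"
begin

text \<open>Complex Minkowski space of dimension d = 1 + CARD('m) (so d \<ge> 2 automatically):
  a point is a pair (z^0, (z^1,...,z^{d-1})).\<close>

type_synonym 'm cmink = "complex \<times> (complex ^ 'm)"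
type_synonym 'm rmink = "real \<times> (real ^ 'm)"

definition mink_form :: "'m::finite cmink \<Rightarrow> 'm cmink \<Rightarrow> complex" where
  "mink_form z w = fst z * fst w - (\<Sum>j\<in>UNIV. snd z $ j * snd w $ j)"

definition rmink_form :: "'m::finite rmink \<Rightarrow> 'm rmink \<Rightarrow> real" where
  "rmink_form y v = fst y * fst v - (\<Sum>j\<in>UNIV. snd y $ j * snd v $ j)"

definition re_part :: "'m::finite cmink \<Rightarrow> 'm rmink" where
  "re_part z = (Re (fst z), \<chi> j. Re (snd z $ j))"

definition im_part :: "'m::finite cmink \<Rightarrow> 'm rmink" where
  "im_part z = (Im (fst z), \<chi> j. Im (snd z $ j))"

definition future_tube :: "'m::finite cmink set" where
  "future_tube = {z. rmink_form (im_part z) (im_part z) > 0 \<and> fst (im_part z) > 0}"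

definition cut_set :: "'m::finite cmink set" where
  "cut_set = {z. \<exists>t::real. t \<le> 0 \<and> mink_form z z + 1 = complex_of_real t}"

end

theory Submission imports Defs begin

lemma im_part_lin: "im_part (a *\<^sub>R z + b *\<^sub>R w) = a *\<^sub>R im_part z + b *\<^sub>R im_part w"
  by (simp add: im_part_def vec_eq_iff)

lemma im_part_scale: "im_part (a *\<^sub>R z) = a *\<^sub>R im_part z"
  by (simp add: im_part_def vec_eq_iff)

lemma rmink_self: "rmink_form y y = (fst y)^2 - norm (snd y)^2"
  by (simp add: rmink_form_def norm_vec_def L2_set_def sum_nonneg power2_eq_square)

lemma tube_iff: "z \<in> future_tube \<longleftrightarrow> norm (snd (im_part z)) < fst (im_part z)"
proof -
  have "(a::real)^2 - b^2 > 0 \<and> a > 0 \<longleftrightarrow> b < a" if "b \<ge> 0" for a b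
  proof
    assume h: "a^2 - b^2 > 0 \<and> a > 0"
    show "b < a"
    proof (rule ccontr)
      assume "\<not> b < a"
      then have "a^2 \<le> b^2" using h by (intro power_mono) auto
      then show False using h by simp
    qed
  next
    assume h: "b < a"
    then have "b^2 < a^2" using that by (intro power_strict_mono) auto
    then show "a^2 - b^2 > 0 \<and> a > 0" using h that by simp
  qed
  then show ?thesis unfolding future_tube_def rmink_self by auto
qed

lemma tube_convex:
  assumes "z \<in> future_tube" "w \<in> future_tube" "0 \<le> u" "u \<le> 1"
  shows "(1-u) *\<^sub>R z + u *\<^sub>R w \<in> future_tube"
proof -
  let ?a = "im_part z" and ?b = "im_part w"
  have "norm ((1-u) *\<^sub>R snd ?a + u *\<^sub>R snd ?b) \<le> (1-u) * norm (snd ?a) + u * norm (snd ?b)"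
    using assms by (rule_tac order_trans[OF norm_triangle_ineq]) simp
  also have "\<dots> < (1-u) * fst ?a + u * fst ?b"
  proof (cases "u = 0")
    case True then show ?thesis using assms unfolding tube_iff by simp
  next
    case False
    have "(1-u) * norm (snd ?a) \<le> (1-u) * fst ?a"
      using assms unfolding tube_iff by (intro mult_left_mono) auto
    moreover have "u * norm (snd ?b) < u * fst ?b"
      using assms False unfolding tube_iff by (intro mult_strict_left_mono) auto
    ultimately show ?thesis by linarith
  qed
  finally show ?thesis unfolding tube_iff im_part_lin by simp
qed

lemma tube_scale:
  assumes "z \<in> future_tube" "0 < c"
  shows "c *\<^sub>R z \<in> future_tube"
  using assms unfolding tube_iff im_part_scale by simp

lemma mink_scale: "mink_form (c *\<^sub>R z) (c *\<^sub>R z) = of_real (c^2) * mink_form z z"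
proof -
  have e: "\<And>a::complex. c *\<^sub>R a = of_real c * a" by (simp add: scaleR_conv_of_real)
  show ?thesis
    by (simp add: mink_form_def e sum_distrib_left algebra_simps power2_eq_square)
qed

lemma mink_bound: "norm (mink_form z z) \<le> (norm z)^2"
proof -
  have "norm (\<Sum>j\<in>UNIV. snd z $ j * snd z $ j) \<le> (\<Sum>j\<in>UNIV. norm (snd z $ j)^2)"
    by (rule order_trans[OF norm_sum]) (simp add: norm_mult power2_eq_square)
  also have "\<dots> = norm (snd z)^2"
    by (simp add: norm_vec_def L2_set_def sum_nonneg)
  finally have "norm (\<Sum>j\<in>UNIV. snd z $ j * snd z $ j) \<le> norm (snd z)^2" .
  moreover have "norm (fst z * fst z) = norm (fst z)^2" by (simp add: norm_mult power2_eq_square)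
  moreover have "(norm z)^2 = norm (fst z)^2 + norm (snd z)^2"
    by (simp add: norm_prod_def)
  moreover have "norm (mink_form z z) \<le> norm (fst z * fst z) + norm (\<Sum>j\<in>UNIV. snd z $ j * snd z $ j)"
    unfolding mink_form_def by (rule norm_triangle_ineq4)
  ultimately show ?thesis by linarith
qed

lemma small_not_cut:
  assumes "norm z \<le> 1/2" shows "z \<notin> cut_set"
proof
  assume "z \<in> cut_set"
  then obtain t :: real where t: "t \<le> 0" "mink_form z z + 1 = of_real t" by (auto simp: cut_set_def)
  then have "mink_form z z = of_real (t - 1)" by (metis add_diff_cancel_right' of_real_1 of_real_diff)
  then have "norm (mink_form z z) = norm (complex_of_real (t - 1))" by (simp only:)
  then have "norm (mink_form z z) \<ge> 1" using t by (simp only: norm_of_real)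
  moreover have "(norm z)^2 \<le> 1/4" using assms power_mono[of "norm z" "1/2" 2] by (simp add: power_divide)
  ultimately show False using mink_bound[of z] by linarith
qed

lemma scale_not_cut:
  assumes "z \<notin> cut_set" "0 < c" "c \<le> 1"
  shows "c *\<^sub>R z \<notin> cut_set"
proof
  assume "c *\<^sub>R z \<in> cut_set"
  then obtain t :: real where t: "t \<le> 0" "of_real (c^2) * mink_form z z + 1 = of_real t"
    by (auto simp: cut_set_def mink_scale)
  then have "mink_form z z = of_real ((t - 1) / c^2)" using assms
    by (simp add: field_simps)
  moreover have "(t - 1) / c^2 \<le> -1" using assms t
  proof -
    have "c^2 \<le> 1" using assms by (intro power_le_one) auto
    moreover have "c^2 > 0" using assms by simp
    ultimately show ?thesis using t by (simp add: pos_divide_le_eq)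
  qed
  ultimately have "mink_form z z + 1 = of_real ((t - 1) / c^2 + 1)" by simp
  moreover have "(t - 1) / c^2 + 1 \<le> 0" using \<open>(t - 1) / c^2 \<le> -1\<close> by simp
  ultimately show False using assms(1) unfolding cut_set_def by blast
qed


lemma im_part_linear: "linear im_part"
  by (rule linearI) (simp_all add: im_part_def vec_eq_iff)

lemma im_part_cont: "continuous_on UNIV im_part"
  by (rule linear_continuous_on) (simp add: im_part_linear flip: linear_conv_bounded_linear)

lemma open_tube: "open (future_tube :: 'a::finite cmink set)"
proof -
  have e: "future_tube = {z::'a cmink. norm (snd (im_part z)) < fst (im_part z)}"
    by (simp add: set_eq_iff tube_iff)
  have c1: "continuous_on UNIV (\<lambda>z::'a::finite cmink. norm (snd (im_part z)))"
    by (intro continuous_on_norm continuous_on_snd im_part_cont)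
  have c2: "continuous_on UNIV (\<lambda>z::'a::finite cmink. fst (im_part z))"
    by (intro continuous_on_fst im_part_cont)
  show ?thesis unfolding e by (rule open_Collect_less[OF c1 c2])
qed

lemma mink_cont: "continuous_on UNIV (\<lambda>z::'a::finite cmink. mink_form z z)"
  unfolding mink_form_def
  by (intro continuous_on_diff continuous_on_mult continuous_on_sum continuous_on_fst
        continuous_on_snd continuous_on_component continuous_on_id)

lemma closed_cut: "closed (cut_set :: 'a::finite cmink set)"
proof -
  have e: "cut_set = {z::'a cmink. Im (mink_form z z) = 0} \<inter> {z. Re (mink_form z z) + 1 \<le> 0}"
  proof (intro set_eqI iffI)
    fix z assume "z \<in> cut_set"
    then obtain t :: real where "t \<le> 0" "mink_form z z + 1 = of_real t" by (auto simp: cut_set_def)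
    then have "Im (mink_form z z + 1) = Im (complex_of_real t)" "Re (mink_form z z + 1) = Re (complex_of_real t)"
      by (simp_all only:)
    then have "Im (mink_form z z) = 0" "Re (mink_form z z) + 1 = t"
      by simp_all
    then show "z \<in> {z. Im (mink_form z z) = 0} \<inter> {z. Re (mink_form z z) + 1 \<le> 0}"
      using \<open>t \<le> 0\<close> by simp
  next
    fix z assume z: "z \<in> {z. Im (mink_form z z) = 0} \<inter> {z. Re (mink_form z z) + 1 \<le> 0}"
    then have "mink_form z z + 1 = of_real (Re (mink_form z z) + 1)" by (simp add: complex_eq_iff)
    then show "z \<in> cut_set" using z unfolding cut_set_def by blast
  qed
  have c1: "closed {z::'a::finite cmink. Im (mink_form z z) = 0}"
    by (intro closed_Collect_eq continuous_on_Im mink_cont continuous_on_const)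
  have c2: "closed {z::'a::finite cmink. Re (mink_form z z) + 1 \<le> 0}"
    by (intro closed_Collect_le continuous_on_add continuous_on_Re mink_cont continuous_on_const)
  show ?thesis unfolding e by (rule closed_Int[OF c1 c2])
qed

lemma tube_nonzero: "z \<in> future_tube \<Longrightarrow> z \<noteq> 0"
  by (auto simp: tube_iff im_part_def)

lemma contractible_S: "contractible (future_tube - cut_set :: 'm::finite cmink set)"
proof -
  define S where "S = (future_tube - cut_set :: 'm cmink set)"
  define mu where "mu = (\<lambda>z::'m cmink. min 1 (1 / (2 * norm z)))"
  define g where "g = (\<lambda>z::'m cmink. mu z *\<^sub>R z)"
  define c :: "'m cmink" where "c = (Complex 0 (1/4), 0)"
  have nz: "z \<noteq> 0" if "z \<in> S" for z
    using that tube_nonzero[of z] by (simp add: S_def)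
  have mu_pos: "0 < mu z" "mu z \<le> 1" if "z \<in> S" for z
    using nz[OF that] by (auto simp: mu_def)
  have gnorm: "norm (g z) \<le> 1/2" if "z \<in> S" for z
  proof -
    have "z \<noteq> 0" using nz[OF that] .
    then have "mu z * norm z \<le> 1 / (2 * norm z) * norm z"
      by (intro mult_right_mono) (auto simp: mu_def)
    also have "\<dots> = 1/2" using \<open>z \<noteq> 0\<close> by simp
    finally show ?thesis using mu_pos[OF that] by (simp add: g_def)
  qed
  have z0: "(\<chi> j. (0::real)) = (0::real^'m)" by (simp add: vec_eq_iff)
  have c_in: "c \<in> future_tube" by (simp add: tube_iff im_part_def c_def z0)
  have c_norm: "norm c \<le> 1/2" by (simp add: c_def norm_prod_def cmod_def)
  have contg: "continuous_on S g"
  proof -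
    have "continuous_on S (\<lambda>z. min 1 (1 / (2 * norm z)))"
      using nz by (intro continuous_intros) auto
    then show ?thesis unfolding g_def mu_def by (intro continuous_on_scaleR continuous_on_id)
  qed
  have h1: "homotopic_with_canon (\<lambda>x. True) S S id g"
  proof (rule homotopic_with_linear)
    show "continuous_on S id" by (rule continuous_on_id')
    show "continuous_on S g" by (rule contg)
    fix z assume z: "z \<in> S"
    show "closed_segment (id z) (g z) \<subseteq> S"
    proof
      fix w assume "w \<in> closed_segment (id z) (g z)"
      then obtain u where u: "0 \<le> u" "u \<le> 1" "w = (1 - u) *\<^sub>R z + u *\<^sub>R g z"
        by (auto simp: closed_segment_def)
      have w: "w = (1 - u + u * mu z) *\<^sub>R z" using u by (simp add: g_def algebra_simps)
      have a: "u * (1 - mu z) \<le> 1 - mu z"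
        using u mu_pos[OF z] by (intro mult_left_le_one_le) auto
      have p: "0 < 1 - u + u * mu z"
        using a mu_pos[OF z] by (simp add: algebra_simps)
      have b: "u * mu z \<le> u"
        using u mu_pos[OF z] by (intro mult_left_le) auto
      have q: "1 - u + u * mu z \<le> 1"
        using b by simp
      show "w \<in> S" using z p q unfolding w S_def
        by (auto intro: tube_scale dest: scale_not_cut[of z])
    qed
  qed
  have h2: "homotopic_with_canon (\<lambda>x. True) S S g (\<lambda>x. c)"
  proof (rule homotopic_with_linear)
    show "continuous_on S g" by (rule contg)
    show "continuous_on S (\<lambda>x. c)" by (rule continuous_on_const)
    fix z assume z: "z \<in> S"
    have gz: "g z \<in> future_tube" using z mu_pos[OF z] by (auto simp: g_def S_def intro: tube_scale)
    show "closed_segment (g z) c \<subseteq> S"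
    proof
      fix w assume "w \<in> closed_segment (g z) c"
      then obtain u where u: "0 \<le> u" "u \<le> 1" "w = (1 - u) *\<^sub>R g z + u *\<^sub>R c"
        by (auto simp: closed_segment_def)
      have "w \<in> future_tube" using u gz c_in tube_convex by simp
      moreover have "norm w \<le> 1/2"
      proof -
        have "norm w \<le> norm ((1 - u) *\<^sub>R g z) + norm (u *\<^sub>R c)"
          unfolding u(3) by (rule norm_triangle_ineq)
        also have "\<dots> = (1 - u) * norm (g z) + u * norm c"
          using u by simp
        also have "\<dots> \<le> (1 - u) * (1/2) + u * (1/2)"
          using u gnorm[OF z] c_norm by (intro add_mono mult_left_mono) auto
        finally show ?thesis by (simp add: field_simps)
      qed
      ultimately show "w \<in> S" by (simp add: S_def small_not_cut)
    qed
  qed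
  have "homotopic_with_canon (\<lambda>x. True) S S id (\<lambda>x. c)"
    by (rule homotopic_with_trans[OF h1 h2])
  then show ?thesis unfolding contractible_def S_def by blast
qed

theorem lemma26:
  shows "open (future_tube - cut_set :: 'm::finite cmink set)
       \<and> connected (future_tube - cut_set :: 'm::finite cmink set)
       \<and> simply_connected (future_tube - cut_set :: 'm::finite cmink set)"
  using contractible_S[where 'm='m] open_tube closed_cut
  by (auto intro: open_Diff contractible_imp_connected contractible_imp_simply_connected)

end
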